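(* Let $N$ be a race-free network state and $G$ a global type with $N\vdash_g G$. If $N\xrightarrow{(p,\lambda,q)}M$, then there exists a global type $G'$ such that $G\xRightarrow{(p,\lambda,q)}G'$ and $M\vdash_g G'$.
   Context: Session calculus. Threads: $P ::= \mathbf{end} \mid \bigoplus_{i\in I} p_i!\lambda_i;P_i \mid \sum_{i\in I} p_i?\lambda_i;P_i \mid X \mid \mu X.P$, $I$ finite (nonempty for $\bigoplus$), $\mu X.X$, $\mu X.\mu Y.P$ excluded. Networks: $N ::= p[\![P]\!] \mid 0 \mid N\parallel N$, with distinct locations, closed threads, every named location a location of $N$. Thread states additionally allow $\langle q!\lambda\rangle;P$; network states are built from thread states likewise, modulo $\equiv$ (associativity, commutativity of $\parallel$, unit $0$). $\mathrm{proc}(p,N)$ is the unique $P$ with $N\equiv p[\![P]\!]\parallel N'$. Transitions: least relation closed under $\equiv$ with (choice) $p[\![\bigoplus_{i\in I}p_i!\lambda_i;P_i]\!]\parallel N \xrightarrow{\tau} p[\![\langle p_k!\lambda_k\rangle;P_k]\!]\parallel N$ ($k\in I$); (unfold) $p[\![\mu X.P]\!]\parallel N\xrightarrow{\tau} p[\![P\{\mu X.P/X\}]\!]\parallel N$; (comm) $p_k[\![\langle q!\lambda_k\rangle;Q]\!]\parallel q[\![\sum_{i\in I}p_i?\lambda_i;P_i]\!]\parallel N \xrightarrow{(p_k,\lambda_k,q)} p_k[\![Q]\!]\parallel q[\![P_k]\!]\parallel N$ ($k\in I$). A network state has a race if $N\xrightarrow{(p,\lambda,r)}N'$ and $N\xrightarrow{(q,\mu,r)}N''$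 with $p\neq q$ or $N'\neq N''$; it is race-free if no state reachable from it has a race. Global types: $G ::= \mathbf{end} \mid \boxplus_{i\in I} p\to q_i{:}\lambda_i;G_i \mid X \mid \mu X.G$, $I$ finite nonempty, $p\neq q_i$, $\mu X.X$ and $\mu X.\mu Y.G$ excluded. Participants: $\mathrm{pt}(\mathbf{end})=\mathrm{pt}(X)=\emptyset$, $\mathrm{pt}(\mu X.G)=\mathrm{pt}(G)$, $\mathrm{pt}(\boxplus_{i\in I}p\to q_i{:}\lambda_i;G_i)=\bigcup_{i}(\{p,q_i\}\cup\mathrm{pt}(G_i))$. Projection types are like threads but with receives only of the unary form $p?\lambda;Q$, plus a merge $\sqcap_{i\in I}Q_i$. Projection $G\upharpoonright r$: $\mathbf{end}\upharpoonright r=\mathbf{end}$; $X\upharpoonright r=X$; $(\mu X.G)\upharpoonright r=\mathbf{end}$ if $r\notin\mathrm{pt}(G)$ and $\mu X.G$ is closed, else $\mu X.(G\upharpoonright r)$; $(\boxplus_{i\in I}p\to q_i{:}\lambda_i;G_i)\upharpoonright r$ equals $\bigoplus_{i\in I}q_i!\lambda_i;(G_i\upharpoonright r)$ if $r=p$, and otherwise $\sqcap_{i\in I}((p\to q_i{:}\lambda_i;G_i)\upharpoonright r)$, where $(p\to q{:}\lambda;G)\upharpoonright r$ is $p?\lambda;(G\upharpoonright r)$ if $r=q$ and $G\upharpoonright r$ if $r\notin\{p,q\}$. The judgement $P\vdash Q$ (thread state vs projection type) is the largest relation closed under: $P\{\mu X.P/X\}\vdash Q \Rightarrow \mu X.P\vdash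 Q$; $P\vdash Q\{\mu X.Q/X\}\Rightarrow P\vdash \mu X.Q$; $\mathbf{end}\vdash\mathbf{end}$; ($i\in I$, $P_i\vdash Q_i$) $\Rightarrow \sum_{i\in I}p_i?\lambda_i;P_i\vdash p_i?\lambda_i;Q_i$; ($I\subseteq J$, $P_i\vdash Q_i$ for all $i\in I$) $\Rightarrow \bigoplus_{i\in I}p_i!\lambda_i;P_i\vdash\bigoplus_{i\in J}p_i!\lambda_i;Q_i$; ($P\vdash Q_i$ for all $i\in I$) $\Rightarrow P\vdash\sqcap_{i\in I}Q_i$; ($k\in I$, $P_k\vdash Q_k$) $\Rightarrow \langle q_k!\lambda_k\rangle;P_k\vdash\bigoplus_{i\in I}q_i!\lambda_i;Q_i$. A projection type is guarded if every occurrence of a variable $X$ inside a subexpression $\mu X.Q$ lies within a subexpression $p!\lambda;Q'$ or $p?\lambda;Q'$. For a network state $N$ with locations $p_1,\dots,p_n$: $N\vdash G$ if $G$ is closed, $\mathrm{pt}(G)\subseteq\{p_1,\dots,p_n\}$ and $\mathrm{proc}(p_i,N)\vdash G\upharpoonright p_i$ for all $i$; $N\vdash_g G$ if moreover every $G\upharpoonright p_i$ is guarded. Transitions on global types $\xRightarrow{\alpha}$: the least relation with (1) $\boxplus_{i\in I}p\to q_i{:}\lambda_i;G_i\xRightarrow{(p,\lambda_k,q_k)}G_k$ for $k\in I$; (2) if $\emptyset\neq I\subseteq J$, $G_i\xRightarrow{(p,\lambda,q)}H_i$ for all $i\in I$, and $p,q\notin\{r\}\cup\{s_i\mid i\in I\}$,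 then $\boxplus_{i\in J}r\to s_i{:}\lambda_i;G_i\xRightarrow{(p,\lambda,q)}\boxplus_{i\in I}r\to s_i{:}\lambda_i;H_i$; (3) if $H\{\mu X.H/X\}\xRightarrow{\alpha}G$ then $\mu X.H\xRightarrow{\alpha}G$. *)

theory Defs
  imports Main
begin

text \<open>Finite indexed families (choices) are represented as lists of branches.
  The constructor TPend q l P is the thread state <q!l>;P.\<close>

datatype ('p, 'l) thread =
    TEnd
  | TSend "('p \<times> 'l \<times> ('p, 'l) thread) list"
  | TRecv "('p \<times> 'l \<times> ('p, 'l) thread) list"
  | TVar nat
  | TMu nat "('p, 'l) thread"
  | TPend 'p 'l "('p, 'l) thread"

primrec tsubst :: "nat \<Rightarrow> ('p,'l) thread \<Rightarrow> ('p,'l) thread \<Rightarrow> ('p,'l) thread" where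
  "tsubst X S TEnd = TEnd"
| "tsubst X S (TSend bs) = TSend (map (map_prod id (map_prod id (tsubst X S))) bs)"
| "tsubst X S (TRecv bs) = TRecv (map (map_prod id (map_prod id (tsubst X S))) bs)"
| "tsubst X S (TVar Y) = (if X = Y then S else TVar Y)"
| "tsubst X S (TMu Y P) = (if X = Y then TMu Y P else TMu Y (tsubst X S P))"
| "tsubst X S (TPend q l P) = TPend q l (tsubst X S P)"

primrec tfv :: "('p,'l) thread \<Rightarrow> nat set" where
  "tfv TEnd = {}"
| "tfv (TSend bs) = (\<Union>b\<in>set (map (map_prod id (map_prod id tfv)) bs). snd (snd b))"
| "tfv (TRecv bs) = (\<Union>b\<in>set (map (map_prod id (map_prod id tfv)) bs). snd (snd b))"
| "tfv (TVar Y) = {Y}"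
| "tfv (TMu Y P) = tfv P - {Y}"
| "tfv (TPend q l P) = tfv P"

primrec tlocs :: "('p,'l) thread \<Rightarrow> 'p set" where
  "tlocs TEnd = {}"
| "tlocs (TSend bs) = (\<Union>b\<in>set (map (map_prod id (map_prod id tlocs)) bs). {fst b} \<union> snd (snd b))"
| "tlocs (TRecv bs) = (\<Union>b\<in>set (map (map_prod id (map_prod id tlocs)) bs). {fst b} \<union> snd (snd b))"
| "tlocs (TVar Y) = {}"
| "tlocs (TMu Y P) = tlocs P"
| "tlocs (TPend q l P) = {q} \<union> tlocs P"

primrec is_thread :: "('p,'l) thread \<Rightarrow> bool" where
  "is_thread TEnd = True"
| "is_thread (TSend bs) = (bs \<noteq> [] \<and> (\<forall>b\<in>set (map (map_prod id (map_prod id is_thread)) bs). snd (snd b)))"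
| "is_thread (TRecv bs) = (\<forall>b\<in>set (map (map_prod id (map_prod id is_thread)) bs). snd (snd b))"
| "is_thread (TVar Y) = True"
| "is_thread (TMu Y P) = (P \<noteq> TVar Y \<and> (\<forall>Z Q. P \<noteq> TMu Z Q) \<and> is_thread P)"
| "is_thread (TPend q l P) = False"

definition is_tstate :: "('p,'l) thread \<Rightarrow> bool" where
  "is_tstate P \<longleftrightarrow> is_thread P \<or> (\<exists>q l Q. P = TPend q l Q \<and> is_thread Q)"

text \<open>A network state modulo structural congruence (associativity, commutativity, unit 0,
  distinct locations) is represented as a finite partial map from locations to thread states.\<close>

type_synonym ('p,'l) net = "'p \<Rightarrow> ('p,'l) thread option"

definition is_netstate :: "('p,'l) net \<Rightarrow> bool" where
  "is_netstate N \<longleftrightarrow> finite (dom N) \<and>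
     (\<forall>p P. N p = Some P \<longrightarrow> is_tstate P \<and> tfv P = {} \<and> tlocs P \<subseteq> dom N)"

datatype ('p,'l) act = Tau | Comm 'p 'l 'p

inductive nstep :: "('p,'l) net \<Rightarrow> ('p,'l) act \<Rightarrow> ('p,'l) net \<Rightarrow> bool" where
  choice: "\<lbrakk>N p = Some (TSend bs); k < length bs; bs ! k = (q, l, P)\<rbrakk>
           \<Longrightarrow> nstep N Tau (N(p \<mapsto> TPend q l P))"
| unfold: "N p = Some (TMu X P) \<Longrightarrow> nstep N Tau (N(p \<mapsto> tsubst X (TMu X P) P))"
| comm: "\<lbrakk>N p = Some (TPend q l Q); N q = Some (TRecv bs); k < length bs; bs ! k = (p, l, P)\<rbrakk>
           \<Longrightarrow> nstep N (Comm p l q) (N(p \<mapsto> Q, q \<mapsto> P))"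

definition nreach :: "('p,'l) net \<Rightarrow> ('p,'l) net \<Rightarrow> bool" where
  "nreach = (\<lambda>N M. \<exists>a. nstep N a M)\<^sup>*\<^sup>*"

definition has_race :: "('p,'l) net \<Rightarrow> bool" where
  "has_race N \<longleftrightarrow> (\<exists>p l r N' q m N''. nstep N (Comm p l r) N' \<and> nstep N (Comm q m r) N''
                      \<and> (p \<noteq> q \<or> N' \<noteq> N''))"

definition race_free :: "('p,'l) net \<Rightarrow> bool" where
  "race_free N \<longleftrightarrow> (\<forall>M. nreach N M \<longrightarrow> \<not> has_race M)"

datatype ('p,'l) gtype =
    GEnd
  | GChoice 'p "('p \<times> 'l \<times> ('p,'l) gtype) list"
  | GVar nat
  | GMu nat "('p,'l) gtype"

primrec gsubst :: "nat \<Rightarrow> ('p,'l) gtype \<Rightarrow> ('p,'l) gtype \<Rightarrow> ('p,'l) gtype" where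
  "gsubst X S GEnd = GEnd"
| "gsubst X S (GChoice p bs) = GChoice p (map (map_prod id (map_prod id (gsubst X S))) bs)"
| "gsubst X S (GVar Y) = (if X = Y then S else GVar Y)"
| "gsubst X S (GMu Y G) = (if X = Y then GMu Y G else GMu Y (gsubst X S G))"

primrec gfv :: "('p,'l) gtype \<Rightarrow> nat set" where
  "gfv GEnd = {}"
| "gfv (GChoice p bs) = (\<Union>b\<in>set (map (map_prod id (map_prod id gfv)) bs). snd (snd b))"
| "gfv (GVar Y) = {Y}"
| "gfv (GMu Y G) = gfv G - {Y}"

primrec pt :: "('p,'l) gtype \<Rightarrow> 'p set" where
  "pt GEnd = {}"
| "pt (GChoice p bs) = (\<Union>b\<in>set (map (map_prod id (map_prod id pt)) bs). {p, fst b} \<union> snd (snd b))"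
| "pt (GVar Y) = {}"
| "pt (GMu Y G) = pt G"

primrec wf_gtype :: "('p,'l) gtype \<Rightarrow> bool" where
  "wf_gtype GEnd = True"
| "wf_gtype (GChoice p bs) = (bs \<noteq> [] \<and> (\<forall>b\<in>set (map (map_prod id (map_prod id wf_gtype)) bs). p \<noteq> fst b \<and> snd (snd b)))"
| "wf_gtype (GVar Y) = True"
| "wf_gtype (GMu Y G) = (G \<noteq> GVar Y \<and> (\<forall>Z H. G \<noteq> GMu Z H) \<and> wf_gtype G)"

datatype ('p,'l) ptype =
    PEnd
  | PSend "('p \<times> 'l \<times> ('p,'l) ptype) list"
  | PRecv 'p 'l "('p,'l) ptype"
  | PVar nat
  | PMu nat "('p,'l) ptype"
  | PMerge "('p,'l) ptype list"

primrec psubst :: "nat \<Rightarrow> ('p,'l) ptype \<Rightarrow> ('p,'l) ptype \<Rightarrow> ('p,'l) ptype" where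
  "psubst X S PEnd = PEnd"
| "psubst X S (PSend bs) = PSend (map (map_prod id (map_prod id (psubst X S))) bs)"
| "psubst X S (PRecv p l Q) = PRecv p l (psubst X S Q)"
| "psubst X S (PVar Y) = (if X = Y then S else PVar Y)"
| "psubst X S (PMu Y Q) = (if X = Y then PMu Y Q else PMu Y (psubst X S Q))"
| "psubst X S (PMerge qs) = PMerge (map (psubst X S) qs)"

primrec proj :: "('p,'l) gtype \<Rightarrow> 'p \<Rightarrow> ('p,'l) ptype" where
  "proj GEnd r = PEnd"
| "proj (GVar X) r = PVar X"
| "proj (GMu X G) r =
     (if r \<notin> pt G \<and> gfv (GMu X G) = {} then PEnd else PMu X (proj G r))"
| "proj (GChoice p bs) r =
     (let ps = map (map_prod id (map_prod id (\<lambda>G. proj G r))) bs in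
      if r = p then PSend ps
      else PMerge (map (\<lambda>(q,l,Q). if r = q then PRecv p l Q else Q) ps))"

primrec unguarded :: "nat \<Rightarrow> ('p,'l) ptype \<Rightarrow> bool" where
  "unguarded X PEnd = False"
| "unguarded X (PSend bs) = False"
| "unguarded X (PRecv p l Q) = False"
| "unguarded X (PVar Y) = (X = Y)"
| "unguarded X (PMu Y Q) = (X \<noteq> Y \<and> unguarded X Q)"
| "unguarded X (PMerge qs) = (\<exists>Q\<in>set (map (unguarded X) qs). Q)"

primrec guarded :: "('p,'l) ptype \<Rightarrow> bool" where
  "guarded PEnd = True"
| "guarded (PSend bs) = (\<forall>b\<in>set (map (map_prod id (map_prod id guarded)) bs). snd (snd b))"
| "guarded (PRecv p l Q) = guarded Q"
| "guarded (PVar Y) = True"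
| "guarded (PMu Y Q) = (\<not> unguarded Y Q \<and> guarded Q)"
| "guarded (PMerge qs) = (\<forall>Q\<in>set (map guarded qs). Q)"

coinductive tj :: "('p,'l) thread \<Rightarrow> ('p,'l) ptype \<Rightarrow> bool" where
  mu_l: "tj (tsubst X (TMu X P) P) Q \<Longrightarrow> tj (TMu X P) Q"
| mu_r: "tj P (psubst X (PMu X Q) Q) \<Longrightarrow> tj P (PMu X Q)"
| endr: "tj TEnd PEnd"
| recv: "\<lbrakk>k < length bs; bs ! k = (p, l, P); tj P Q\<rbrakk> \<Longrightarrow> tj (TRecv bs) (PRecv p l Q)"
| send: "\<lbrakk>inj_on f {..<length bs};
          \<forall>i<length bs. f i < length cs \<and> fst (cs ! f i) = fst (bs ! i)
                 \<and> fst (snd (cs ! f i)) = fst (snd (bs ! i))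
                 \<and> tj (snd (snd (bs ! i))) (snd (snd (cs ! f i)))\<rbrakk>
          \<Longrightarrow> tj (TSend bs) (PSend cs)"
| merge: "\<forall>Q\<in>set qs. tj P Q \<Longrightarrow> tj P (PMerge qs)"
| pend: "\<lbrakk>k < length cs; cs ! k = (q, l, Q); tj P Q\<rbrakk> \<Longrightarrow> tj (TPend q l P) (PSend cs)"

definition net_typ :: "('p,'l) net \<Rightarrow> ('p,'l) gtype \<Rightarrow> bool" where
  "net_typ N G \<longleftrightarrow> gfv G = {} \<and> pt G \<subseteq> dom N \<and>
     (\<forall>p P. N p = Some P \<longrightarrow> tj P (proj G p))"

definition net_typ_g :: "('p,'l) net \<Rightarrow> ('p,'l) gtype \<Rightarrow> bool" where
  "net_typ_g N G \<longleftrightarrow> net_typ N G \<and> (\<forall>p\<in>dom N. guarded (proj G p))"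

text \<open>A sub-family indexed by I \<subseteq> J is given by a nonempty list of distinct indices into the branch list.\<close>
inductive gstep :: "('p,'l) gtype \<Rightarrow> 'p \<times> 'l \<times> 'p \<Rightarrow> ('p,'l) gtype \<Rightarrow> bool" where
  top: "\<lbrakk>k < length bs; bs ! k = (q, l, G)\<rbrakk> \<Longrightarrow> gstep (GChoice p bs) (p, l, q) G"
| deep: "\<lbrakk>is \<noteq> []; distinct is; \<forall>i\<in>set is. i < length bs;
          length hs = length is;
          \<forall>j<length is. gstep (snd (snd (bs ! (is ! j)))) (p, l, q) (hs ! j);
          p \<noteq> r; q \<noteq> r; \<forall>i\<in>set is. p \<noteq> fst (bs ! i) \<and> q \<noteq> fst (bs ! i)\<rbrakk>
          \<Longrightarrow> gstep (GChoice r bs) (p, l, q)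
                (GChoice r (map (\<lambda>j. (fst (bs ! (is ! j)), fst (snd (bs ! (is ! j))), hs ! j))
                               [0..<length is]))"
| mu: "gstep (gsubst X (GMu X H) H) a G \<Longrightarrow> gstep (GMu X H) a G"

end

theory Submission
  imports Defs
begin


lemma thread_ind[case_names TEnd TSend TRecv TVar TMu TPend]:
  assumes "P TEnd"
   "\<And>bs. (\<And>a b c. (a,b,c) \<in> set bs \<Longrightarrow> P c) \<Longrightarrow> P (TSend bs)"
   "\<And>bs. (\<And>a b c. (a,b,c) \<in> set bs \<Longrightarrow> P c) \<Longrightarrow> P (TRecv bs)"
   "\<And>X. P (TVar X)" "\<And>X Q. P Q \<Longrightarrow> P (TMu X Q)" "\<And>q l Q. P Q \<Longrightarrow> P (TPend q l Q)"
  shows "P t"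
  apply (induction t rule: thread.induct)
  using assms by (fastforce simp: snds.simps)+

lemma gtype_ind[case_names GEnd GChoice GVar GMu]:
  assumes "P GEnd"
   "\<And>r bs. (\<And>a b c. (a,b,c) \<in> set bs \<Longrightarrow> P c) \<Longrightarrow> P (GChoice r bs)"
   "\<And>X. P (GVar X)" "\<And>X Q. P Q \<Longrightarrow> P (GMu X Q)"
  shows "P t"
  apply (induction t rule: gtype.induct)
  using assms by (fastforce simp: snds.simps)+

lemma ptype_ind[case_names PEnd PSend PRecv PVar PMu PMerge]:
  assumes "P PEnd"
   "\<And>bs. (\<And>a b c. (a,b,c) \<in> set bs \<Longrightarrow> P c) \<Longrightarrow> P (PSend bs)"
   "\<And>p l Q. P Q \<Longrightarrow> P (PRecv p l Q)"
   "\<And>X. P (PVar X)" "\<And>X Q. P Q \<Longrightarrow> P (PMu X Q)" "\<And>qs. (\<And>Q. Q \<in> set qs \<Longrightarrow> P Q) \<Longrightarrow> P (PMerge qs)"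
  shows "P t"
  apply (induction t rule: ptype.induct)
  using assms by (fastforce simp: snds.simps)+

primrec tung :: "nat \<Rightarrow> ('p,'l) thread \<Rightarrow> bool" where
  "tung X TEnd = False"
| "tung X (TSend bs) = False"
| "tung X (TRecv bs) = False"
| "tung X (TVar Y) = (X = Y)"
| "tung X (TMu Y P) = (X \<noteq> Y \<and> tung X P)"
| "tung X (TPend q l P) = False"

primrec tgd :: "('p,'l) thread \<Rightarrow> bool" where
  "tgd TEnd = True"
| "tgd (TSend bs) = (\<forall>b\<in>set (map (map_prod id (map_prod id tgd)) bs). snd (snd b))"
| "tgd (TRecv bs) = (\<forall>b\<in>set (map (map_prod id (map_prod id tgd)) bs). snd (snd b))"
| "tgd (TVar Y) = True"
| "tgd (TMu Y P) = (\<not> tung Y P \<and> tgd P)"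
| "tgd (TPend q l P) = tgd P"

primrec tsne :: "('p,'l) thread \<Rightarrow> bool" where
  "tsne TEnd = True"
| "tsne (TSend bs) = (bs \<noteq> [] \<and> (\<forall>b\<in>set (map (map_prod id (map_prod id tsne)) bs). snd (snd b)))"
| "tsne (TRecv bs) = (\<forall>b\<in>set (map (map_prod id (map_prod id tsne)) bs). snd (snd b))"
| "tsne (TVar Y) = True"
| "tsne (TMu Y P) = tsne P"
| "tsne (TPend q l P) = tsne P"

primrec tlead :: "('p,'l) thread \<Rightarrow> nat" where
  "tlead TEnd = 0"
| "tlead (TSend bs) = 0"
| "tlead (TRecv bs) = 0"
| "tlead (TVar Y) = 0"
| "tlead (TMu Y P) = Suc (tlead P)"
| "tlead (TPend q l P) = 0"

lemma tfv_tsubst: "tfv (tsubst X S P) \<subseteq> tfv P - {X} \<union> tfv S"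
proof (induction P rule: thread_ind)
  case (TSend bs)
  show ?case
  proof
    fix x assume "x \<in> tfv (tsubst X S (TSend bs))"
    then obtain a b c where "(a,b,c) \<in> set bs" "x \<in> tfv (tsubst X S c)" by auto
    then show "x \<in> tfv (TSend bs) - {X} \<union> tfv S" using TSend by force
  qed
next
  case (TRecv bs)
  show ?case
  proof
    fix x assume "x \<in> tfv (tsubst X S (TRecv bs))"
    then obtain a b c where "(a,b,c) \<in> set bs" "x \<in> tfv (tsubst X S c)" by auto
    then show "x \<in> tfv (TRecv bs) - {X} \<union> tfv S" using TRecv by force
  qed
qed auto

lemma tung_fv: "tung X P \<Longrightarrow> X \<in> tfv P"
  by (induction P rule: thread_ind) auto

lemma tung_tsubst: "tung Y (tsubst X S Q) \<Longrightarrow> tung Y Q \<or> (tung X Q \<and> tung Y S)"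
  by (induction Q rule: thread_ind) (auto split: if_splits)

lemma tgd_tsubst: "tgd Q \<Longrightarrow> tgd S \<Longrightarrow> tfv S = {} \<Longrightarrow> tgd (tsubst X S Q)"
proof (induction Q rule: thread_ind)
  case (TMu Y Q)
  then show ?case using tung_tsubst[of Y X S Q] tung_fv[of Y S] by auto
qed fastforce+

lemma tsne_tsubst: "tsne Q \<Longrightarrow> tsne S \<Longrightarrow> tsne (tsubst X S Q)"
  by (induction Q rule: thread_ind) fastforce+

lemma tlead_tsubst: "\<not> tung X P \<Longrightarrow> tlead (tsubst X S P) = tlead P"
  by (induction P rule: thread_ind) auto

definition tgood :: "('p,'l) thread \<Rightarrow> bool" where
  "tgood T \<longleftrightarrow> tfv T = {} \<and> tgd T \<and> tsne T"

lemma tgood_unfold: "tgood (TMu X P) \<Longrightarrow> tgood (tsubst X (TMu X P) P)"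
  unfolding tgood_def using tfv_tsubst[of X "TMu X P" P] tgd_tsubst tsne_tsubst
  by (metis Diff_empty Un_empty_right subset_empty tfv.simps(5) tgd.simps(5) tsne.simps(5))

lemma tlead_unfold: "tgood (TMu X P) \<Longrightarrow> tlead (tsubst X (TMu X P) P) < tlead (TMu X P)"
  unfolding tgood_def by (simp add: tlead_tsubst)

inductive unfs :: "('p,'l) thread \<Rightarrow> ('p,'l) thread \<Rightarrow> bool" where
  unfs_refl: "unfs T T"
| unfs_step: "unfs (tsubst X (TMu X P) P) T \<Longrightarrow> unfs (TMu X P) T"

lemma unfs_exists: "tgood T \<Longrightarrow> \<exists>T'. unfs T T' \<and> tgood T' \<and> (\<forall>X P. T' \<noteq> TMu X P)"
proof (induction "tlead T" arbitrary: T rule: less_induct)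
  case less
  show ?case
  proof (cases T)
    case (TMu X P)
    then obtain T' where "unfs (tsubst X (TMu X P) P) T'" "tgood T'" "\<forall>X P. T' \<noteq> TMu X P"
      using less tgood_unfold tlead_unfold by metis
    then show ?thesis using TMu unfs_step by blast
  qed (use less unfs_refl in blast)+
qed



lemma tj_unfold_l:
  assumes "tj (TMu X P) Q" shows "tj (tsubst X (TMu X P) P) Q"
  apply (rule tj.coinduct[where X="\<lambda>T Q. \<exists>X P. tj (TMu X P) Q \<and> T = tsubst X (TMu X P) P"])
   apply (use assms in blast)
  apply (elim exE conjE)
  apply (erule tj.cases)
        apply simp_all
    apply (erule tj.cases; fastforce)
   apply blast
  apply blast
  done

lemma tj_merge_D:
  assumes "tj T (PMerge qs)" "Q \<in> set qs" shows "tj T Q"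
  apply (rule tj.coinduct[where X="\<lambda>T Q. \<exists>qs. tj T (PMerge qs) \<and> Q \<in> set qs"])
   apply (use assms in blast)
  apply (elim exE conjE)
  apply (erule tj.cases)
        apply simp_all
   apply blast
  apply (drule (1) bspec)
  apply (erule tj.cases)
        apply auto
  done

lemma tj_mu_D:
  assumes "tj T (PMu Y Q)" shows "tj T (psubst Y (PMu Y Q) Q)"
  apply (rule tj.coinduct[where X="\<lambda>T Q'. \<exists>Y Q. tj T (PMu Y Q) \<and> Q' = psubst Y (PMu Y Q) Q"])
   apply (use assms in blast)
  apply (elim exE conjE)
  apply (erule tj.cases)
        apply simp_all
   apply blast
  apply (erule tj.cases)
        apply auto
  done

inductive endlike :: "('p,'l) ptype \<Rightarrow> bool" where
  "endlike PEnd"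
| "(\<And>Q. Q \<in> set qs \<Longrightarrow> endlike Q) \<Longrightarrow> endlike (PMerge qs)"

lemma tj_endlike:
  assumes "tj T PEnd" "endlike Q" shows "tj T Q"
  apply (rule tj.coinduct[where X="\<lambda>T Q. tj T PEnd \<and> endlike Q"])
   apply (use assms in blast)
  apply (elim conjE)
  subgoal for T Q
    apply (cases "\<exists>X P. T = TMu X P")
     apply (elim exE)
     apply (erule tj.cases; simp)
    apply (erule endlike.cases)
     apply (erule tj.cases; fastforce)
    apply (rule disjI2, rule disjI2, rule disjI2, rule disjI2, rule disjI2, rule disjI1)
    by auto
  done



lemma unfs_tj_fwd: "unfs T T' \<Longrightarrow> tj T Q \<Longrightarrow> tj T' Q"
  by (induction rule: unfs.induct) (auto dest: tj_unfold_l)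

lemma unfs_tj_bwd: "unfs T T' \<Longrightarrow> tj T' Q \<Longrightarrow> tj T Q"
  by (induction rule: unfs.induct) (auto intro: tj.mu_l)

lemma unfs_tgood: "unfs T T' \<Longrightarrow> tgood T \<Longrightarrow> tgood T'"
  by (induction rule: unfs.induct) (auto dest: tgood_unfold)

lemma inv_pend_send: "tj (TPend q l P) (PSend cs) \<Longrightarrow> \<exists>k Q. k < length cs \<and> cs!k = (q,l,Q) \<and> tj P Q"
  by (erule tj.cases) auto

lemma inv_send_send: "tj (TSend bs) (PSend cs) \<Longrightarrow> \<exists>f. inj_on f {..<length bs} \<and>
          (\<forall>i<length bs. f i < length cs \<and> fst (cs ! f i) = fst (bs ! i)
                 \<and> fst (snd (cs ! f i)) = fst (snd (bs ! i))
                 \<and> tj (snd (snd (bs ! i))) (snd (snd (cs ! f i))))"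
  by (erule tj.cases) auto

lemma inv_recv_recv: "tj (TRecv bs) (PRecv p l Q) \<Longrightarrow> \<exists>k P. k < length bs \<and> bs!k = (p,l,P) \<and> tj P Q"
  by (erule tj.cases) auto

lemma inv_nonmu_merge: "tj T (PMerge qs) \<Longrightarrow> Q \<in> set qs \<Longrightarrow> tj T Q"
  by (rule tj_merge_D)

lemma inv_false1: "tj (TPend q l P) (PRecv p m Q) \<Longrightarrow> False"
  by (erule tj.cases) auto
lemma inv_false2: "tj (TRecv bs) (PSend cs) \<Longrightarrow> False"
  by (erule tj.cases) auto
lemma inv_false3: "tj (TPend q l P) PEnd \<Longrightarrow> False"
  by (erule tj.cases) auto
lemma inv_false4: "tj TEnd (PSend cs) \<Longrightarrow> False"
  by (erule tj.cases) auto
lemma inv_false5: "tj TEnd (PRecv p l Q) \<Longrightarrow> False"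
  by (erule tj.cases) auto
lemma inv_false6: "tj (TSend bs) (PRecv p l Q) \<Longrightarrow> False"
  by (erule tj.cases) auto
lemma inv_false7: "tj (TVar X) Q \<Longrightarrow> Q \<noteq> PEnd \<Longrightarrow> (\<forall>qs. Q \<noteq> PMerge qs) \<Longrightarrow> (\<forall>X Q'. Q \<noteq> PMu X Q') \<Longrightarrow> False"
  by (erule tj.cases) auto

lemma nreach_refl: "nreach N N" unfolding nreach_def by simp

lemma nreach_step: "nreach N N' \<Longrightarrow> nstep N' a N'' \<Longrightarrow> nreach N N''"
  unfolding nreach_def by (rule rtranclp.rtrancl_into_rtrancl) blast+

lemma nreach_trans: "nreach N N' \<Longrightarrow> nreach N' N'' \<Longrightarrow> nreach N N''"
  unfolding nreach_def by simp

lemma race_free_reach: "race_free N \<Longrightarrow> nreach N N' \<Longrightarrow> race_free N'"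
  unfolding race_free_def using nreach_trans by blast

lemma race_free_no_race: "race_free N \<Longrightarrow> \<not> has_race N"
  unfolding race_free_def using nreach_refl by blast

lemma unfs_nreach: "unfs T T' \<Longrightarrow> N t = Some T \<Longrightarrow> nreach N (N(t \<mapsto> T'))"
proof (induction arbitrary: N rule: unfs.induct)
  case (unfs_refl T)
  then show ?case by (simp add: map_upd_triv nreach_refl)
next
  case (unfs_step X P T)
  have s: "nstep N Tau (N(t \<mapsto> tsubst X (TMu X P) P))" using unfs_step(3) by (rule nstep.unfold)
  have "nreach (N(t \<mapsto> tsubst X (TMu X P) P)) ((N(t \<mapsto> tsubst X (TMu X P) P))(t \<mapsto> T))"
    using unfs_step(2)[of "N(t \<mapsto> tsubst X (TMu X P) P)"] by (simp add: fun_upd_def)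
  moreover have "nreach N (N(t \<mapsto> tsubst X (TMu X P) P))"
    using s nreach_step nreach_refl by blast
  ultimately show ?case using nreach_trans by fastforce
qed



primrec pfv :: "('p,'l) ptype \<Rightarrow> nat set" where
  "pfv PEnd = {}"
| "pfv (PSend bs) = (\<Union>b\<in>set (map (map_prod id (map_prod id pfv)) bs). snd (snd b))"
| "pfv (PRecv p l Q) = pfv Q"
| "pfv (PVar Y) = {Y}"
| "pfv (PMu Y Q) = pfv Q - {Y}"
| "pfv (PMerge qs) = (\<Union>Q\<in>set (map pfv qs). Q)"

primrec gne :: "('p,'l) gtype \<Rightarrow> bool" where
  "gne GEnd = True"
| "gne (GChoice p bs) = (bs \<noteq> [] \<and> (\<forall>b\<in>set (map (map_prod id (map_prod id gne)) bs). snd (snd b)))"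
| "gne (GVar Y) = True"
| "gne (GMu Y G) = gne G"

primrec gsr :: "('p,'l) gtype \<Rightarrow> bool" where
  "gsr GEnd = True"
| "gsr (GChoice p bs) = (\<forall>b\<in>set (map (map_prod id (map_prod id gsr)) bs). p \<noteq> fst b \<and> snd (snd b))"
| "gsr (GVar Y) = True"
| "gsr (GMu Y G) = gsr G"

primrec mp :: "'p \<Rightarrow> ('p,'l) gtype \<Rightarrow> nat" where
  "mp p GEnd = 0"
| "mp p (GChoice r bs) = (if r = p then 0 else Suc (foldr max (map (\<lambda>b. if fst b = p then 0 else snd (snd b)) (map (map_prod id (map_prod id (mp p))) bs)) 0))"
| "mp p (GVar Y) = 0"
| "mp p (GMu Y G) = Suc (mp p G)"

lemma foldr_max_ge: "x \<in> set xs \<Longrightarrow> x \<le> foldr max xs (0::nat)"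
  by (induction xs) auto

lemma mp_branch: "r \<noteq> p \<Longrightarrow> (s, m, G) \<in> set bs \<Longrightarrow> s \<noteq> p \<Longrightarrow> mp p G < mp p (GChoice r bs)"
proof -
  assume a: "r \<noteq> p" "(s, m, G) \<in> set bs" "s \<noteq> p"
  have "mp p G \<in> set (map (\<lambda>b. if fst b = p then 0 else snd (snd b)) (map (map_prod id (map_prod id (mp p))) bs))"
    using a by force
  then show ?thesis using a foldr_max_ge by fastforce
qed

lemma gfv_gsubst: "gfv (gsubst X S H) \<subseteq> gfv H - {X} \<union> gfv S"
proof (induction H rule: gtype_ind)
  case (GChoice r bs)
  show ?case
  proof
    fix x assume "x \<in> gfv (gsubst X S (GChoice r bs))"
    then obtain a b c where "(a,b,c) \<in> set bs" "x \<in> gfv (gsubst X S c)" by auto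
    then show "x \<in> gfv (GChoice r bs) - {X} \<union> gfv S" using GChoice by force
  qed
qed auto

lemma gsubst_id: "X \<notin> gfv H \<Longrightarrow> gsubst X S H = H"
proof (induction H rule: gtype_ind)
  case (GChoice r bs)
  then show ?case by (auto intro!: map_idI) 
qed auto

lemma pt_GChoice: "x \<in> pt (GChoice r bs) \<longleftrightarrow> bs \<noteq> [] \<and> (x = r \<or> (\<exists>a b c. (a,b,c) \<in> set bs \<and> (x = a \<or> x \<in> pt c)))"
  by (cases bs) force+

lemma pt_gsubst: "pt (gsubst X S H) \<subseteq> pt H \<union> pt S"
proof (induction H rule: gtype_ind)
  case (GChoice r bs)
  show ?case
  proof
    fix x assume "x \<in> pt (gsubst X S (GChoice r bs))"
    then have "x = r \<or> (\<exists>a b c. (a,b,c) \<in> set bs \<and> (x = a \<or> x \<in> pt (gsubst X S c)))" and "bs \<noteq> []"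
      unfolding gsubst.simps pt_GChoice by force+
    then show "x \<in> pt (GChoice r bs) \<union> pt S" using GChoice unfolding Un_iff pt_GChoice by blast
  qed
qed auto

lemma pt_gsubst2: "X \<in> gfv H \<Longrightarrow> pt S \<subseteq> pt (gsubst X S H)"
proof (induction H rule: gtype_ind)
  case (GChoice r bs)
  then obtain a b c where "(a,b,c) \<in> set bs" "X \<in> gfv c" by auto
  then show ?case using GChoice by force
qed auto

lemma pfv_proj: "pfv (proj H t) \<subseteq> gfv H"
proof (induction H rule: gtype_ind)
  case (GChoice r bs)
  show ?case
  proof
    fix x assume "x \<in> pfv (proj (GChoice r bs) t)"
    then obtain a b c where "(a,b,c) \<in> set bs" "x \<in> pfv (proj c t)"
      by (auto simp: Let_def split: if_splits)
    then show "x \<in> gfv (GChoice r bs)" using GChoice by force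
  qed
qed auto

lemma psubst_id: "X \<notin> pfv Q \<Longrightarrow> psubst X S Q = Q"
proof (induction Q rule: ptype_ind)
  case (PSend bs)
  then show ?case by (auto intro!: map_idI) 
next
  case (PMerge qs)
  then show ?case by (auto intro!: map_idI) 
qed auto

lemma proj_gsubst: "t \<in> pt S \<Longrightarrow> proj (gsubst X S H) t = psubst X (proj S t) (proj H t)"
proof (induction H rule: gtype_ind)
  case (GChoice r bs)
  then show ?case by (auto simp: Let_def)
next
  case (GMu Y H)
  show ?case
  proof (cases "X = Y")
    case True
    then show ?thesis by auto
  next
    case False
    show ?thesis
    proof (cases "X \<in> gfv H")
      case True
      then have "t \<in> pt (gsubst X S H)" using pt_gsubst2 GMu by blast
      then show ?thesis using False True GMu by auto
    next
      case nf: False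
      then have "X \<notin> pfv (proj H t)" using pfv_proj[of H t] by blast
      then have "gsubst X S H = H" "psubst X (proj S t) (proj H t) = proj H t"
        using nf gsubst_id psubst_id by auto
      then show ?thesis using False by simp
    qed
  qed
qed auto



lemma unguarded_fv: "unguarded Y Q \<Longrightarrow> Y \<in> pfv Q"
  by (induction Q rule: ptype_ind) auto

lemma unguarded_psubst: "unguarded Y (psubst X S Q) \<Longrightarrow> unguarded Y Q \<or> (unguarded X Q \<and> unguarded Y S)"
  by (induction Q rule: ptype_ind) (auto split: if_splits)

lemma guarded_psubst: "guarded Q \<Longrightarrow> guarded S \<Longrightarrow> pfv S = {} \<Longrightarrow> guarded (psubst X S Q)"
proof (induction Q rule: ptype_ind)
  case (PMu Y Q)
  then show ?case using unguarded_psubst[of Y X S Q] unguarded_fv[of Y S] by auto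
qed fastforce+

lemma guarded_unfold: "guarded (PMu X Q) \<Longrightarrow> pfv (PMu X Q) = {} \<Longrightarrow> guarded (psubst X (PMu X Q) Q)"
  using guarded_psubst by (metis guarded.simps(5))

lemma endlike_guarded: "endlike Q \<Longrightarrow> guarded Q"
  by (induction rule: endlike.induct) auto

lemma endlike_proj: "t \<notin> pt U \<Longrightarrow> gfv U = {} \<Longrightarrow> gne U \<Longrightarrow> endlike (proj U t)"
proof (induction U rule: gtype_ind)
  case GEnd
  then show ?case by (auto intro: endlike.intros)
next
  case (GChoice r bs)
  have "t \<noteq> r" using GChoice(2,4) by (simp add: pt_GChoice)
  have "endlike Q" if "Q \<in> set (map (\<lambda>(q, l, Q). if t = q then PRecv r l Q else Q) (map (map_prod id (map_prod id (\<lambda>G. proj G t))) bs))" for Q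
  proof -
    from that obtain a b c where abc: "(a,b,c) \<in> set bs" "Q = (if t = a then PRecv r b (proj c t) else proj c t)" by auto
    have "t \<noteq> a" "t \<notin> pt c" using abc GChoice(2,4) by (auto simp: pt_GChoice)
    moreover have "gfv c = {}" "gne c" using abc GChoice(3,4) by auto
    ultimately show ?thesis using GChoice(1)[OF abc(1)] abc by auto
  qed
  then show ?case using \<open>t \<noteq> r\<close> by (auto simp: Let_def intro: endlike.intros)
next
  case (GMu X H)
  then show ?case by (auto intro: endlike.intros)
qed auto

lemma mp_gsubst: "\<not> unguarded X (proj H p) \<Longrightarrow> mp p (gsubst X S H) = mp p H"
proof (induction H rule: gtype_ind)
  case (GChoice r bs)
  show ?case
  proof (cases "r = p")
    case False
    have eq: "map (\<lambda>b. if fst b = p then 0 else snd (snd b)) (map (map_prod id (map_prod id (mp p))) (map (map_prod id (map_prod id (gsubst X S))) bs))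
        = map (\<lambda>b. if fst b = p then 0 else snd (snd b)) (map (map_prod id (map_prod id (mp p))) bs)"
    proof (rule nth_equalityI)
      fix i assume "i < length (map (\<lambda>b. if fst b = p then 0 else snd (snd b)) (map (map_prod id (map_prod id (mp p))) (map (map_prod id (map_prod id (gsubst X S))) bs)))"
      then have i: "i < length bs" by simp
      obtain a b c where abc: "bs ! i = (a,b,c)" by (cases "bs ! i") auto
      then have m: "(a,b,c) \<in> set bs" using i nth_mem by metis
      show "map (\<lambda>b. if fst b = p then 0 else snd (snd b)) (map (map_prod id (map_prod id (mp p))) (map (map_prod id (map_prod id (gsubst X S))) bs)) ! i =
         map (\<lambda>b. if fst b = p then 0 else snd (snd b)) (map (map_prod id (map_prod id (mp p))) bs) ! i"
      proof (cases "a = p")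
        case True
        then show ?thesis using i abc by simp
      next
        case ap: False
        have "proj c p \<in> set (map (\<lambda>(q, l, Q). if p = q then PRecv r l Q else Q) (map (map_prod id (map_prod id (\<lambda>G. proj G p))) bs))"
          using m ap by force
        then have "\<not> unguarded X (proj c p)" using GChoice(2) False by (auto simp: Let_def)
        then show ?thesis using GChoice(1)[OF m] i abc ap by simp
      qed
    qed simp
    show ?thesis by (simp only: gsubst.simps mp.simps eq)
  qed simp
next
  case (GMu Y H)
  show ?case
  proof (cases "X = Y")
    case False
    show ?thesis
    proof (cases "p \<notin> pt H \<and> gfv (GMu Y H) = {}")
      case True
      then have "X \<notin> gfv H" using False by auto
      then have "gsubst X S H = H" by (rule gsubst_id)
      then show ?thesis using False by simp
    next
      case nc: False
      then have "proj (GMu Y H) p = PMu Y (proj H p)" by (simp only: proj.simps if_False)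
      then have "\<not> unguarded X (proj H p)" using GMu(2) False by auto
      then show ?thesis using GMu(1) False by simp
    qed
  qed simp
qed auto

lemma gne_gsubst: "gne H \<Longrightarrow> gne S \<Longrightarrow> gne (gsubst X S H)"
  by (induction H rule: gtype_ind) fastforce+

lemma gsr_gsubst: "gsr H \<Longrightarrow> gsr S \<Longrightarrow> gsr (gsubst X S H)"
  by (induction H rule: gtype_ind) fastforce+

lemma wf_gne: "wf_gtype G \<Longrightarrow> gne G"
  by (induction G rule: gtype_ind) fastforce+

lemma wf_gsr: "wf_gtype G \<Longrightarrow> gsr G"
  by (induction G rule: gtype_ind) fastforce+

lemma is_thread_tgd: "is_thread T \<Longrightarrow> tgd T \<and> tsne T"
proof (induction T rule: thread_ind)
  case (TMu X Q)
  then show ?case by (cases Q) auto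
qed fastforce+

lemma tstate_tgood: "is_tstate T \<Longrightarrow> tfv T = {} \<Longrightarrow> tgood T"
  unfolding is_tstate_def tgood_def using is_thread_tgd by fastforce



definition ginv :: "('p,'l) net \<Rightarrow> ('p,'l) gtype \<Rightarrow> bool" where
  "ginv N G \<longleftrightarrow> race_free N \<and> gfv G = {} \<and> gne G \<and> gsr G \<and> pt G \<subseteq> dom N \<and>
     (\<forall>t T. N t = Some T \<longrightarrow> tgood T \<and> tj T (proj G t) \<and> guarded (proj G t))"

definition outp :: "('p,'l) net \<Rightarrow> ('p,'l) gtype \<Rightarrow> bool" where
  "outp M G \<longleftrightarrow> gfv G = {} \<and> pt G \<subseteq> dom M \<and>
     (\<forall>t T. M t = Some T \<longrightarrow> tj T (proj G t) \<and> guarded (proj G t))"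

lemma proj_choice_other: "t \<noteq> r \<Longrightarrow> proj (GChoice r xs) t = PMerge (map (\<lambda>(s,m,G). if t = s then PRecv r m (proj G t) else proj G t) xs)"
  by (auto simp: Let_def)

lemma proj_choice_self: "proj (GChoice r xs) r = PSend (map (\<lambda>(s,m,G). (s,m,proj G r)) xs)"
  by (auto simp: Let_def)

lemma comp_in: "i < length xs \<Longrightarrow> xs ! i = (s,m,Gi) \<Longrightarrow>
   (if t = s then PRecv r m (proj Gi t) else proj Gi t) \<in> set (map (\<lambda>(s,m,G). if t = s then PRecv r m (proj G t) else proj G t) xs)"
proof -
  assume a: "i < length xs" "xs ! i = (s,m,Gi)"
  have "(s,m,Gi) \<in> set xs" using a nth_mem by fastforce
  then show ?thesis by (simp add: rev_image_eqI)
qed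

lemma comp_tj: "t \<noteq> r \<Longrightarrow> tj T (proj (GChoice r xs) t) \<Longrightarrow> i < length xs \<Longrightarrow> xs ! i = (s,m,Gi) \<Longrightarrow>
   tj T (if t = s then PRecv r m (proj Gi t) else proj Gi t)"
proof -
  assume a: "t \<noteq> r" "tj T (proj (GChoice r xs) t)" "i < length xs" "xs ! i = (s,m,Gi)"
  have m: "(if t = s then PRecv r m (proj Gi t) else proj Gi t) \<in> set (map (\<lambda>(s,m,G). if t = s then PRecv r m (proj G t) else proj G t) xs)"
    by (rule comp_in[OF a(3,4)])
  have "tj T (PMerge (map (\<lambda>(s,m,G). if t = s then PRecv r m (proj G t) else proj G t) xs))"
    using a(2) unfolding proj_choice_other[OF a(1)] .
  then show ?thesis using m tj_merge_D by blast
qed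

lemma comp_guarded: "t \<noteq> r \<Longrightarrow> guarded (proj (GChoice r xs) t) \<Longrightarrow> i < length xs \<Longrightarrow> xs ! i = (s,m,Gi) \<Longrightarrow>
   guarded (proj Gi t)"
proof -
  assume a: "t \<noteq> r" "guarded (proj (GChoice r xs) t)" "i < length xs" "xs ! i = (s,m,Gi)"
  have m: "(if t = s then PRecv r m (proj Gi t) else proj Gi t) \<in> set (map (\<lambda>(s,m,G). if t = s then PRecv r m (proj G t) else proj G t) xs)"
    by (rule comp_in[OF a(3,4)])
  have "guarded (PMerge (map (\<lambda>(s,m,G). if t = s then PRecv r m (proj G t) else proj G t) xs))"
    using a(2) unfolding proj_choice_other[OF a(1)] .
  then have "guarded (if t = s then PRecv r m (proj Gi t) else proj Gi t)" using m
    by (simp only: guarded.simps set_map) blast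
  then show ?thesis by (cases "t = s") auto
qed

lemma self_guarded: "guarded (proj (GChoice r xs) r) \<Longrightarrow> i < length xs \<Longrightarrow> xs ! i = (s,m,Gi) \<Longrightarrow>
   guarded (proj Gi r)"
proof -
  assume a: "guarded (proj (GChoice r xs) r)" "i < length xs" "xs ! i = (s,m,Gi)"
  have "(s,m,proj Gi r) \<in> set (map (\<lambda>(s,m,G). (s,m,proj G r)) xs)"
    using a(2,3) nth_mem[of i xs] by (simp add: rev_image_eqI)
  then show ?thesis using a(1) unfolding proj_choice_self by force
qed

lemma branch_mem: "i < length xs \<Longrightarrow> xs ! i = (s,m,Gi) \<Longrightarrow> (s,m,Gi) \<in> set xs"
  using nth_mem by fastforce

lemma gfv_branch: "gfv (GChoice r xs) = {} \<Longrightarrow> (s,m,Gi) \<in> set xs \<Longrightarrow> gfv Gi = {}"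
  by auto

lemma pt_branch: "(s,m,Gi) \<in> set xs \<Longrightarrow> pt Gi \<subseteq> pt (GChoice r xs) \<and> r \<in> pt (GChoice r xs) \<and> s \<in> pt (GChoice r xs)"
  unfolding pt_GChoice by auto

lemma tgood_var: "tgood (TVar X) \<Longrightarrow> False"
  unfolding tgood_def by simp

lemma comm_race:
  assumes "N p = Some (TPend r l Q)" "N r = Some (TRecv bs)" "k < length bs" "bs ! k = (p, l, P)"
     "N q = Some (TPend r m Q')" "k' < length bs" "bs ! k' = (q, m, P')" "p \<noteq> q"
  shows "has_race N"
proof -
  have "nstep N (Comm p l r) (N(p \<mapsto> Q, r \<mapsto> P))" using assms(1-4) by (rule nstep.comm)
  moreover have "nstep N (Comm q m r) (N(q \<mapsto> Q', r \<mapsto> P'))" using assms(5,2,6,7) by (rule nstep.comm)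
  ultimately show ?thesis unfolding has_race_def using assms(8) by blast
qed

lemma top_case:
  assumes ginv: "ginv N (GChoice p gbs)"
    and Np: "N p = Some (TPend q l Q)" and Nq: "N q = Some (TRecv bs)" and k: "k < length bs" "bs ! k = (p,l,P)"
  shows "\<exists>G'. gstep (GChoice p gbs) (p,l,q) G' \<and> outp (N(p \<mapsto> Q, q \<mapsto> P)) G'"
proof -
  let ?G = "GChoice p gbs"
  have pq: "p \<noteq> q" using Np Nq by auto
  have "tj (TPend q l Q) (proj ?G p)" using ginv Np unfolding ginv_def by blast
  then have "tj (TPend q l Q) (PSend (map (\<lambda>(s,m,G). (s,m,proj G p)) gbs))" by (simp only: proj_choice_self)
  from inv_pend_send[OF this] obtain k0 C where k0: "k0 < length (map (\<lambda>(s,m,G). (s,m,proj G p)) gbs)"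
      "(map (\<lambda>(s,m,G). (s,m,proj G p)) gbs) ! k0 = (q,l,C)" "tj Q C"
    by blast
  obtain Gk where gk: "gbs ! k0 = (q,l,Gk)" "C = proj Gk p" "k0 < length gbs"
    using k0 by (cases "gbs ! k0") auto
  have gs: "gstep ?G (p,l,q) Gk" by (rule gstep.top[OF gk(3) gk(1)])
  have mem: "(q,l,Gk) \<in> set gbs" by (rule branch_mem[OF gk(3,1)])
  have gfv: "gfv Gk = {}" using ginv mem unfolding ginv_def by auto
  have "dom (N(p \<mapsto> Q, q \<mapsto> P)) = dom N" using Np Nq by auto
  then have pt: "pt Gk \<subseteq> dom (N(p \<mapsto> Q, q \<mapsto> P))" using ginv pt_branch[OF mem, of p] unfolding ginv_def by blast
  have tyr: "tj T (proj Gk t) \<and> guarded (proj Gk t)" if "(N(p \<mapsto> Q, q \<mapsto> P)) t = Some T" for t T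
  proof (cases "t = p")
    case True
    then have "T = Q" using that pq by simp
    moreover have "guarded (proj Gk p)" using ginv Np self_guarded[OF _ gk(3,1)] unfolding ginv_def by blast
    ultimately show ?thesis using k0 gk True by simp
  next
    case tp: False
    show ?thesis
    proof (cases "t = q")
      case True
      then have T: "T = P" using that by simp
      have "tj (TRecv bs) (PRecv p l (proj Gk q))"
        using comp_tj[OF pq[symmetric], of "TRecv bs" gbs k0 q l Gk] ginv Nq gk unfolding ginv_def by auto
      from inv_recv_recv[OF this] obtain k' P' where k': "k' < length bs" "bs ! k' = (p,l,P')" "tj P' (proj Gk q)"
        by blast
      have "P' = P"
      proof (rule ccontr)
        assume ne: "P' \<noteq> P"
        have "nstep N (Comm p l q) (N(p \<mapsto> Q, q \<mapsto> P))" by (rule nstep.comm[OF Np Nq k])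
        moreover have "nstep N (Comm p l q) (N(p \<mapsto> Q, q \<mapsto> P'))" by (rule nstep.comm[OF Np Nq k'(1,2)])
        moreover have "N(p \<mapsto> Q, q \<mapsto> P) \<noteq> N(p \<mapsto> Q, q \<mapsto> P')" using ne by (metis fun_upd_same option.inject)
        ultimately have "has_race N" unfolding has_race_def by blast
        then show False using ginv race_free_no_race unfolding ginv_def by blast
      qed
      moreover have "guarded (proj Gk q)" using ginv Nq comp_guarded[OF pq[symmetric] _ gk(3,1)] unfolding ginv_def by blast
      ultimately show ?thesis using k' T True by simp
    next
      case False
      then have "N t = Some T" using that tp by simp
      then have "tj T (proj ?G t)" "guarded (proj ?G t)" using ginv unfolding ginv_def by blast+
      then show ?thesis using comp_tj[OF tp, of T gbs k0 q l Gk] comp_guarded[OF tp, of gbs k0 q l Gk] gk False by auto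
    qed
  qed
  show ?thesis using gs gfv pt tyr unfolding outp_def by blast
qed



lemma mu_case:
  assumes gi: "ginv N (GMu X H)" and Np: "N p = Some (TPend q l Q)"
  shows "ginv N (gsubst X (GMu X H) H) \<and> mp p (gsubst X (GMu X H) H) < mp p (GMu X H)"
proof -
  let ?G = "GMu X H" let ?U = "gsubst X (GMu X H) H"
  have gfvG: "gfv ?G = {}" using gi unfolding ginv_def by blast
  have gfvU: "gfv ?U = {}" using gfv_gsubst[of X ?G H] gfvG by auto
  have gneU: "gne ?U" using gi gne_gsubst[of H ?G X] unfolding ginv_def by simp
  have gsrU: "gsr ?U" using gi gsr_gsubst[of H ?G X] unfolding ginv_def by simp
  have ptU: "pt ?U \<subseteq> pt H" using pt_gsubst[of X ?G H] by simp
  then have ptU2: "pt ?U \<subseteq> dom N" using gi unfolding ginv_def by auto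
  have th: "tj T (proj ?U t) \<and> guarded (proj ?U t)" if Nt: "N t = Some T" for t T
  proof -
    have a: "tj T (proj ?G t)" "guarded (proj ?G t)" using gi Nt unfolding ginv_def by blast+
    show ?thesis
    proof (cases "t \<in> pt H")
      case True
      then have e1: "proj ?G t = PMu X (proj H t)" by simp
      have e2: "proj ?U t = psubst X (proj ?G t) (proj H t)" using True by (intro proj_gsubst) simp
      have "pfv (proj ?G t) = {}" using pfv_proj[of ?G t] gfvG by blast
      then have f: "pfv (PMu X (proj H t)) = {}" using e1 by simp
      have t0: "tj T (PMu X (proj H t))" using a(1) e1 by simp
      have g0: "guarded (PMu X (proj H t))" using a(2) e1 by simp
      have t1: "tj T (psubst X (PMu X (proj H t)) (proj H t))" using t0 by (rule tj_mu_D)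
      have g1: "guarded (psubst X (PMu X (proj H t)) (proj H t))" using g0 f by (rule guarded_unfold)
      show ?thesis unfolding e2 e1 using t1 g1 by blast
    next
      case False
      then have e1: "proj ?G t = PEnd" using gfvG by (simp only: proj.simps) simp
      have "t \<notin> pt ?U" using False ptU by blast
      then have "endlike (proj ?U t)" using gfvU gneU by (rule endlike_proj)
      moreover have "tj T PEnd" using a e1 by simp
      ultimately show ?thesis using tj_endlike endlike_guarded by blast
    qed
  qed
  have "ginv N ?U" using gi gfvU gneU gsrU ptU2 th unfolding ginv_def by blast
  moreover have "mp p ?U < mp p ?G"
  proof -
    have a: "tj (TPend q l Q) (proj ?G p)" "guarded (proj ?G p)" using gi Np unfolding ginv_def by blast+
    have "p \<in> pt H"
    proof (rule ccontr)
      assume "p \<notin> pt H"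
      then have "proj ?G p = PEnd" using gfvG by simp
      then show False using a inv_false3 by simp
    qed
    then have "proj ?G p = PMu X (proj H p)" by simp
    then have "\<not> unguarded X (proj H p)" using a by simp
    then have "mp p ?U = mp p H" by (rule mp_gsubst)
    then show ?thesis by simp
  qed
  ultimately show ?thesis by blast
qed



lemma tgood_cont_recv: "tgood (TRecv bs) \<Longrightarrow> (a,b,c) \<in> set bs \<Longrightarrow> tgood c"
  unfolding tgood_def by force
lemma tgood_cont_send: "tgood (TSend bs) \<Longrightarrow> (a,b,c) \<in> set bs \<Longrightarrow> tgood c"
  unfolding tgood_def by force
lemma tgood_cont_pend: "tgood (TPend a b c) \<Longrightarrow> tgood c"
  unfolding tgood_def by force
lemma tgood_pend: "tgood c \<Longrightarrow> tgood (TPend a b c)"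
  unfolding tgood_def by force

lemma nonmu_recv:
  assumes "tj T (PRecv r m C)" "tgood T" "\<forall>X P. T \<noteq> TMu X P"
  shows "\<exists>sbs. T = TRecv sbs"
proof (cases T)
  case TEnd then show ?thesis using assms(1) inv_false5 by simp
next
  case (TSend x) then show ?thesis using assms(1) inv_false6 by simp
next
  case (TVar x) then show ?thesis using assms(2) tgood_var by simp
next
  case (TMu x y) then show ?thesis using assms by blast
next
  case (TPend x y z) then show ?thesis using assms(1) inv_false1 by simp
qed simp

lemma deep_branch:
  assumes gi: "ginv N (GChoice r gbs)" and rp: "r \<noteq> p"
    and Np: "N p = Some (TPend q l Q)" and Nq: "N q = Some (TRecv bs)" and k: "k < length bs" "bs ! k = (p,l,P)"
    and i: "i < length gbs" "gbs ! i = (s,m,Gi)"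
    and reach: "nreach N (N(r \<mapsto> TPend s m R))"
    and R: "tj R (proj Gi r)" "tgood R"
    and IH: "\<And>N1 G1. mp p G1 < mp p (GChoice r gbs) \<Longrightarrow> ginv N1 G1 \<Longrightarrow> N1 p = Some (TPend q l Q) \<Longrightarrow>
              N1 q = Some (TRecv bs) \<Longrightarrow> \<exists>G'. gstep G1 (p,l,q) G' \<and> outp (N1(p \<mapsto> Q, q \<mapsto> P)) G'"
  shows "\<exists>H S. gstep Gi (p,l,q) H \<and> s \<noteq> p \<and> s \<noteq> q \<and> s \<noteq> r \<and>
            (\<exists>T. N s = Some T \<and> tj T (PRecv r m (proj H s))) \<and>
            outp (N(r \<mapsto> R, s \<mapsto> S, p \<mapsto> Q, q \<mapsto> P)) H"
proof -
  let ?G = "GChoice r gbs"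
  have pq: "p \<noteq> q" using Np Nq by auto
  have rq: "r \<noteq> q"
  proof
    assume "r = q"
    then have "tj (TRecv bs) (proj ?G r)" using gi Nq unfolding ginv_def by blast
    then show False unfolding proj_choice_self using inv_false2 by blast
  qed
  have mem: "(s,m,Gi) \<in> set gbs" by (rule branch_mem[OF i])
  have gG: "gfv ?G = {}" "gne ?G" "gsr ?G" using gi unfolding ginv_def by blast+
  have sr: "s \<noteq> r" using gG(3) mem by auto
  have sp: "s \<noteq> p"
  proof
    assume sp: "s = p"
    have "tj (TPend q l Q) (proj ?G p)" using gi Np unfolding ginv_def by blast
    then have "tj (TPend q l Q) (if p = s then PRecv r m (proj Gi p) else proj Gi p)"
      using comp_tj[OF rp[symmetric] _ i] by blast
    then show False using sp inv_false1 by simp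
  qed
  have rfN: "race_free N" using gi unfolding ginv_def by blast
  define N2 where "N2 = N(r \<mapsto> TPend s m R)"
  have rf2: "race_free N2" using rfN reach race_free_reach N2_def by blast
  have N2p: "N2 p = Some (TPend q l Q)" using Np rp N2_def by simp
  have N2q: "N2 q = Some (TRecv bs)" using Nq rq N2_def by simp
  have sq: "s \<noteq> q"
  proof
    assume sq: "s = q"
    have "tj (TRecv bs) (proj ?G q)" using gi Nq unfolding ginv_def by blast
    then have "tj (TRecv bs) (if q = s then PRecv r m (proj Gi q) else proj Gi q)"
      using comp_tj[OF rq[symmetric] _ i] by blast
    then have "tj (TRecv bs) (PRecv r m (proj Gi q))" using sq by simp
    from inv_recv_recv[OF this] obtain k'' P'' where k'': "k'' < length bs" "bs ! k'' = (r,m,P'')" by blast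
    have "N2 r = Some (TPend q m R)" using N2_def sq by simp
    then have "has_race N2" using comm_race[OF N2p N2q k _ k'' rp[symmetric]] by blast
    then show False using rf2 race_free_no_race by blast
  qed
  have sdom: "s \<in> dom N" using gi pt_branch[OF mem, of r] unfolding ginv_def by blast
  then obtain Ts where Ns: "N s = Some Ts" by blast
  have gTs: "tgood Ts" using gi Ns unfolding ginv_def by blast
  obtain Ts' where Ts': "unfs Ts Ts'" "tgood Ts'" "\<forall>X P. Ts' \<noteq> TMu X P" using unfs_exists[OF gTs] by blast
  have "tj Ts (proj ?G s)" using gi Ns unfolding ginv_def by blast
  then have "tj Ts (if s = s then PRecv r m (proj Gi s) else proj Gi s)"
    using comp_tj[OF sr _ i] by blast
  then have tjTs: "tj Ts (PRecv r m (proj Gi s))" by simp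
  then have tjTs': "tj Ts' (PRecv r m (proj Gi s))" using unfs_tj_fwd Ts'(1) by blast
  from nonmu_recv[OF tjTs' Ts'(2,3)] obtain sbs where sbs: "Ts' = TRecv sbs" by blast
  have "tj (TRecv sbs) (PRecv r m (proj Gi s))" using tjTs' sbs by simp
  from inv_recv_recv[OF this] obtain k' S where k': "k' < length sbs" "sbs ! k' = (r,m,S)" "tj S (proj Gi s)" by blast
  define N3 where "N3 = N2(s \<mapsto> Ts')"
  have "N2 s = Some Ts" using Ns sr N2_def by simp
  then have r23: "nreach N2 N3" unfolding N3_def by (rule unfs_nreach[OF Ts'(1)])
  have N3r: "N3 r = Some (TPend s m R)" using N3_def N2_def sr by simp
  have N3s: "N3 s = Some (TRecv sbs)" using N3_def sbs by simp
  have st: "nstep N3 (Comm r m s) (N3(r \<mapsto> R, s \<mapsto> S))" by (rule nstep.comm[OF N3r N3s k'(1,2)])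
  define Ni where "Ni = N(r \<mapsto> R, s \<mapsto> S)"
  have "N3(r \<mapsto> R, s \<mapsto> S) = Ni" unfolding Ni_def N3_def N2_def by (rule ext) simp
  moreover have "nreach N N3" using reach r23 nreach_trans unfolding N2_def by blast
  ultimately have reachi: "nreach N Ni" using st nreach_step by metis
  have rfi: "race_free Ni" using rfN reachi race_free_reach by blast
  have gfvi: "gfv Gi = {}" using gG(1) mem by auto
  have gnei: "gne Gi" "gsr Gi" using gG(2,3) mem by auto
  have rdom: "r \<in> dom N" using gi pt_branch[OF mem, of r] unfolding ginv_def by blast
  have domi: "dom Ni = dom N" using rdom sdom unfolding Ni_def by auto
  have pti: "pt Gi \<subseteq> dom Ni" using gi pt_branch[OF mem, of r] domi unfolding ginv_def by blast
  have thi: "tgood T \<and> tj T (proj Gi t) \<and> guarded (proj Gi t)" if "Ni t = Some T" for t T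
  proof (cases "t = s")
    case True
    then have "T = S" using that Ni_def by simp
    moreover have "(r,m,S) \<in> set sbs" using branch_mem[OF k'(1,2)] .
    then have "tgood S" using tgood_cont_recv[of sbs r m S] Ts'(2) sbs by blast
    moreover have "guarded (proj Gi s)" using gi Ns comp_guarded[OF sr _ i] unfolding ginv_def by blast
    ultimately show ?thesis using k' True by simp
  next
    case ts: False
    show ?thesis
    proof (cases "t = r")
      case True
      then have "T = R" using that Ni_def ts by simp
      moreover have "guarded (proj Gi r)" using gi rdom self_guarded[OF _ i] unfolding ginv_def by blast
      ultimately show ?thesis using R True by simp
    next
      case False
      then have Nt: "N t = Some T" using that ts Ni_def by simp
      then have "tgood T" "tj T (proj ?G t)" "guarded (proj ?G t)" using gi unfolding ginv_def by blast+
      then show ?thesis using comp_tj[OF False _ i] comp_guarded[OF False _ i] ts by auto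
    qed
  qed
  have ginvi: "ginv Ni Gi" unfolding ginv_def using rfi gfvi gnei pti thi by blast
  have Nip: "Ni p = Some (TPend q l Q)" using Np rp sp Ni_def by simp
  have Niq: "Ni q = Some (TRecv bs)" using Nq rq sq Ni_def by simp
  have "mp p Gi < mp p ?G" by (rule mp_branch[OF rp mem sp])
  from IH[OF this ginvi Nip Niq] obtain H where H: "gstep Gi (p,l,q) H" "outp (Ni(p \<mapsto> Q, q \<mapsto> P)) H" by blast
  have "(Ni(p \<mapsto> Q, q \<mapsto> P)) s = Some S" using sp sq Ni_def by simp
  then have "tj S (proj H s)" using H(2) unfolding outp_def by blast
  then have "tj (TRecv sbs) (PRecv r m (proj H s))" by (rule tj.recv[OF k'(1,2)])
  then have "tj Ts (PRecv r m (proj H s))" using unfs_tj_bwd Ts'(1) sbs by blast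
  then show ?thesis using H sp sq sr Ns unfolding Ni_def by blast
qed



lemma proj_map_other: "t \<noteq> r \<Longrightarrow> proj (GChoice r (map (\<lambda>j. (a j, b j, h j)) js)) t =
   PMerge (map (\<lambda>j. if t = a j then PRecv r (b j) (proj (h j) t) else proj (h j) t) js)"
  by (simp add: proj_choice_other)

lemma proj_map_self: "proj (GChoice r (map (\<lambda>j. (a j, b j, h j)) js)) r =
   PSend (map (\<lambda>j. (a j, b j, proj (h j) r)) js)"
  by (simp add: proj_choice_self)

lemma deep_assemble:
  fixes a :: "nat \<Rightarrow> 'p" and b :: "nat \<Rightarrow> 'l"
  assumes gi: "ginv N (GChoice r gbs)" and rp: "r \<noteq> p" and rq: "r \<noteq> q"
    and Np: "N p = Some (TPend q l Q)" and Nq: "N q = Some (TRecv bs)"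
    and n: "is \<noteq> []" "distinct is" "\<forall>i\<in>set is. i < length gbs"
    and a: "\<And>j. a j = fst (gbs ! (is ! j))" and b: "\<And>j. b j = fst (snd (gbs ! (is ! j)))"
    and st: "\<And>j. j < length is \<Longrightarrow> gstep (snd (snd (gbs ! (is ! j)))) (p,l,q) (hH j)"
    and ad: "\<And>j. j < length is \<Longrightarrow> a j \<noteq> p \<and> a j \<noteq> q \<and> a j \<noteq> r"
    and rc: "\<And>j. j < length is \<Longrightarrow> \<exists>T. N (a j) = Some T \<and> tj T (PRecv r (b j) (proj (hH j) (a j)))"
    and op: "\<And>j. j < length is \<Longrightarrow> outp (N(r \<mapsto> hR j, a j \<mapsto> hS j, p \<mapsto> Q, q \<mapsto> P)) (hH j)"
    and Nr: "N r = Some Tr"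
    and rtyp: "tj Tr (PSend (map (\<lambda>j. (a j, b j, proj (hH j) r)) [0..<length is]))"
  shows "\<exists>G'. gstep (GChoice r gbs) (p,l,q) G' \<and> outp (N(p \<mapsto> Q, q \<mapsto> P)) G'"
proof -
  let ?n = "length is"
  define hs where "hs = map hH [0..<?n]"
  let ?G' = "GChoice r (map (\<lambda>j. (fst (gbs ! (is ! j)), fst (snd (gbs ! (is ! j))), hs ! j)) [0..<?n])"
  have lhs: "length hs = length is" unfolding hs_def by simp
  have g1: "gstep (GChoice r gbs) (p,l,q) ?G'"
  proof (rule gstep.deep[OF n lhs])
    show "\<forall>j<length is. gstep (snd (snd (gbs ! (is ! j)))) (p, l, q) (hs ! j)"
      using st unfolding hs_def by simp
    show "p \<noteq> r" "q \<noteq> r" using rp rq by auto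
    show "\<forall>i\<in>set is. p \<noteq> fst (gbs ! i) \<and> q \<noteq> fst (gbs ! i)"
    proof
      fix i assume "i \<in> set is"
      then obtain j where "j < ?n" "is ! j = i" by (metis in_set_conv_nth)
      then show "p \<noteq> fst (gbs ! i) \<and> q \<noteq> fst (gbs ! i)" using ad[of j] a[of j] by auto
    qed
  qed
  have eqG: "?G' = GChoice r (map (\<lambda>j. (a j, b j, hH j)) [0..<?n])"
    unfolding hs_def a b by simp
  let ?M = "N(p \<mapsto> Q, q \<mapsto> P)"
  let ?H = "GChoice r (map (\<lambda>j. (a j, b j, hH j)) [0..<?n])"
  have domM: "dom ?M = dom N" using Np Nq by auto
  have rdom: "r \<in> dom N" using Nr by auto
  have domj: "dom (N(r \<mapsto> hR j, a j \<mapsto> hS j, p \<mapsto> Q, q \<mapsto> P)) = dom N" if "j < ?n" for j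
    using rc[OF that] rdom Np Nq by auto
  have gfvH: "gfv ?H = {}"
  proof -
    have "gfv (hH j) = {}" if "j < ?n" for j using op[OF that] unfolding outp_def by blast
    then show ?thesis by auto
  qed
  have ptH: "pt ?H \<subseteq> dom ?M"
  proof
    fix x assume "x \<in> pt ?H"
    then have "x = r \<or> (\<exists>j<?n. x = a j \<or> x \<in> pt (hH j))" unfolding pt_GChoice by auto
    moreover have "pt (hH j) \<subseteq> dom N" if "j < ?n" for j using op[OF that] domj[OF that] unfolding outp_def by blast
    moreover have "a j \<in> dom N" if "j < ?n" for j using rc[OF that] by auto
    ultimately show "x \<in> dom ?M" using domM rdom by blast
  qed
  have thH: "tj T (proj ?H t) \<and> guarded (proj ?H t)" if Mt: "?M t = Some T" for t T
  proof (cases "t = r")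
    case True
    then have T: "T = Tr" using Mt Nr rp rq by auto
    have "guarded (proj (hH j) r)" if "j < ?n" for j
    proof -
      have "(N(r \<mapsto> hR j, a j \<mapsto> hS j, p \<mapsto> Q, q \<mapsto> P)) r = Some (hR j)" using ad[OF that] rp rq by auto
      then show ?thesis using op[OF that] unfolding outp_def by blast
    qed
    then have "guarded (proj ?H r)" unfolding proj_map_self by auto
    moreover have "tj T (proj ?H r)" unfolding proj_map_self using rtyp T by (simp only:)
    ultimately show ?thesis using True by simp
  next
    case False
    have c: "tj T Qc \<and> guarded Qc" if "Qc \<in> set (map (\<lambda>j. if t = a j then PRecv r (b j) (proj (hH j) t) else proj (hH j) t) [0..<?n])" for Qc
    proof -
      from that obtain j where j: "j < ?n" "Qc = (if t = a j then PRecv r (b j) (proj (hH j) t) else proj (hH j) t)" by auto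
      show ?thesis
      proof (cases "t = a j")
        case True
        then have "t \<noteq> p" "t \<noteq> q" using ad[OF j(1)] by auto
        then have Nt: "N t = Some T" using Mt by simp
        obtain T' where T': "N (a j) = Some T'" "tj T' (PRecv r (b j) (proj (hH j) (a j)))" using rc[OF j(1)] by blast
        have "(N(r \<mapsto> hR j, a j \<mapsto> hS j, p \<mapsto> Q, q \<mapsto> P)) (a j) = Some (hS j)" using ad[OF j(1)] by simp
        then have "guarded (proj (hH j) (a j))" using op[OF j(1)] unfolding outp_def by blast
        then show ?thesis using T' Nt True j(2) by simp
      next
        case ta: False
        have "(N(r \<mapsto> hR j, a j \<mapsto> hS j, p \<mapsto> Q, q \<mapsto> P)) t = ?M t" using False ta by simp
        then have "(N(r \<mapsto> hR j, a j \<mapsto> hS j, p \<mapsto> Q, q \<mapsto> P)) t = Some T" using Mt by simp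
        then show ?thesis using op[OF j(1)] ta j(2) unfolding outp_def by simp
      qed
    qed
    then show ?thesis unfolding proj_map_other[OF False] by (auto intro!: tj.merge)
  qed
  have "outp ?M ?H" unfolding outp_def using gfvH ptH thH by blast
  then show ?thesis using g1 eqG by metis
qed



lemma nonmu_send:
  assumes "tj T (PSend cs)" "tgood T" "\<forall>X P. T \<noteq> TMu X P"
  shows "(\<exists>rbs. T = TSend rbs) \<or> (\<exists>s m R. T = TPend s m R)"
proof (cases T)
  case TEnd then show ?thesis using assms(1) inv_false4 by simp
next
  case (TRecv x) then show ?thesis using assms(1) inv_false2 by simp
next
  case (TVar x) then show ?thesis using assms(2) tgood_var by simp
next
  case (TMu x y) then show ?thesis using assms by blast
qed simp_all

lemma main_lemma:
  assumes "ginv N G" "N p = Some (TPend q l Q)" "N q = Some (TRecv bs)" "k < length bs" "bs ! k = (p,l,P)"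
  shows "\<exists>G'. gstep G (p,l,q) G' \<and> outp (N(p \<mapsto> Q, q \<mapsto> P)) G'"
  using assms
proof (induction "mp p G" arbitrary: N G rule: less_induct)
  case less
  note gi = less.prems(1) and Np = less.prems(2) and Nq = less.prems(3) and k = less.prems(4,5)
  have IH: "\<And>N1 G1. mp p G1 < mp p G \<Longrightarrow> ginv N1 G1 \<Longrightarrow> N1 p = Some (TPend q l Q) \<Longrightarrow>
              N1 q = Some (TRecv bs) \<Longrightarrow> \<exists>G'. gstep G1 (p,l,q) G' \<and> outp (N1(p \<mapsto> Q, q \<mapsto> P)) G'"
    using less.hyps k by blast
  show ?case
  proof (cases G)
    case GEnd
    have "tj (TPend q l Q) (proj G p)" using gi Np unfolding ginv_def by blast
    then have False using GEnd inv_false3 by simp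
    then show ?thesis ..
  next
    case (GVar X)
    have "gfv G = {}" using gi unfolding ginv_def by blast
    then have False using GVar by simp
    then show ?thesis ..
  next
    case (GMu X H)
    have m: "ginv N (gsubst X (GMu X H) H) \<and> mp p (gsubst X (GMu X H) H) < mp p (GMu X H)"
      using mu_case[of N X H p q l Q] Np gi GMu by simp
    then have "mp p (gsubst X (GMu X H) H) < mp p G" using GMu by simp
    from IH[OF this conjunct1[OF m] Np Nq] obtain G' where G': "gstep (gsubst X (GMu X H) H) (p,l,q) G'" "outp (N(p \<mapsto> Q, q \<mapsto> P)) G'"
      by blast
    have "gstep (GMu X H) (p,l,q) G'" using G'(1) by (rule gstep.mu)
    then show ?thesis using G'(2) GMu by blast
  next
    case (GChoice r gbs)
    show ?thesis
    proof (cases "r = p")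
      case True
      have "ginv N (GChoice p gbs)" using gi GChoice True by simp
      from top_case[OF this Np Nq k] show ?thesis using GChoice True by simp
    next
      case rp: False
      have giG: "ginv N (GChoice r gbs)" using gi GChoice by simp
      have IH': "\<And>N1 G1. mp p G1 < mp p (GChoice r gbs) \<Longrightarrow> ginv N1 G1 \<Longrightarrow> N1 p = Some (TPend q l Q) \<Longrightarrow>
              N1 q = Some (TRecv bs) \<Longrightarrow> \<exists>G'. gstep G1 (p,l,q) G' \<and> outp (N1(p \<mapsto> Q, q \<mapsto> P)) G'"
        using IH GChoice by blast
      have rq: "r \<noteq> q"
      proof
        assume "r = q"
        then have "tj (TRecv bs) (proj (GChoice r gbs) r)" using giG Nq unfolding ginv_def by blast
        then show False unfolding proj_choice_self using inv_false2 by blast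
      qed
      have "gne (GChoice r gbs)" using giG unfolding ginv_def by blast
      then have "gbs \<noteq> []" by simp
      then have "r \<in> pt (GChoice r gbs)" unfolding pt_GChoice by simp
      then have "r \<in> dom N" using giG unfolding ginv_def by blast
      then obtain Tr where Nr: "N r = Some Tr" by blast
      have gTr: "tgood Tr" using giG Nr unfolding ginv_def by blast
      obtain Tr' where Tr': "unfs Tr Tr'" "tgood Tr'" "\<forall>X P. Tr' \<noteq> TMu X P" using unfs_exists[OF gTr] by blast
      let ?cs = "map (\<lambda>(s,m,G). (s,m,proj G r)) gbs"
      have "tj Tr (proj (GChoice r gbs) r)" using giG Nr unfolding ginv_def by blast
      then have "tj Tr (PSend ?cs)" by (simp only: proj_choice_self)
      then have tjr: "tj Tr' (PSend ?cs)" using unfs_tj_fwd Tr'(1) by blast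
      have reach1: "nreach N (N(r \<mapsto> Tr'))" using unfs_nreach[of Tr Tr' N r] Tr'(1) Nr by blast
      from nonmu_send[OF tjr Tr'(2,3)] show ?thesis
      proof
        assume "\<exists>s m R. Tr' = TPend s m R"
        then obtain s0 m0 R0 where e: "Tr' = TPend s0 m0 R0" by blast
        from inv_pend_send[OF tjr[unfolded e]] obtain k0 C where k0: "k0 < length ?cs" "?cs ! k0 = (s0,m0,C)" "tj R0 C"
          by blast
        obtain G0 where g0: "gbs ! k0 = (s0,m0,G0)" "C = proj G0 r" "k0 < length gbs"
          using k0 by (cases "gbs ! k0") auto
        have tgR0: "tgood R0" using tgood_cont_pend[of s0 m0 R0] Tr'(2) e by simp
        from deep_branch[OF giG rp Np Nq k g0(3,1) reach1[unfolded e] k0(3)[unfolded g0(2)] tgR0 IH']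
        obtain H S where H: "gstep G0 (p,l,q) H" "s0 \<noteq> p \<and> s0 \<noteq> q \<and> s0 \<noteq> r"
            "\<exists>T. N s0 = Some T \<and> tj T (PRecv r m0 (proj H s0))"
            "outp (N(r \<mapsto> R0, s0 \<mapsto> S, p \<mapsto> Q, q \<mapsto> P)) H" by blast
        have rt: "tj Tr (PSend (map (\<lambda>j. (s0, m0, proj H r)) [0..<length [k0]]))"
        proof -
          have "tj Tr' (PSend [(s0, m0, proj H r)])"
          proof -
            have "(N(r \<mapsto> R0, s0 \<mapsto> S, p \<mapsto> Q, q \<mapsto> P)) r = Some R0" using H(2) rp rq by auto
            then have "tj R0 (proj H r)" using H(4) unfolding outp_def by blast
            then show ?thesis unfolding e using tj.pend[of 0 "[(s0, m0, proj H r)]" s0 m0 "proj H r" R0] by simp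
          qed
          then show ?thesis using unfs_tj_bwd Tr'(1) by simp
        qed
        have ne: "[k0] \<noteq> []" "distinct [k0]" "\<forall>i\<in>set [k0]. i < length gbs" using g0 by auto
        have st: "gstep (snd (snd (gbs ! ([k0] ! j)))) (p,l,q) H" if "j < length [k0]" for j
          using that H(1) g0 by simp
        have ad: "fst (gbs ! ([k0] ! j)) \<noteq> p \<and> fst (gbs ! ([k0] ! j)) \<noteq> q \<and> fst (gbs ! ([k0] ! j)) \<noteq> r" if "j < length [k0]" for j
          using that H(2) g0 by simp
        have rc: "\<exists>T. N (fst (gbs ! ([k0] ! j))) = Some T \<and> tj T (PRecv r (fst (snd (gbs ! ([k0] ! j)))) (proj H (fst (gbs ! ([k0] ! j)))))" if "j < length [k0]" for j
          using that H(3) g0 by simp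
        have op: "outp (N(r \<mapsto> R0, fst (gbs ! ([k0] ! j)) \<mapsto> S, p \<mapsto> Q, q \<mapsto> P)) H" if "j < length [k0]" for j
          using that H(4) g0 by simp
        have rt': "tj Tr (PSend (map (\<lambda>j. (fst (gbs ! ([k0] ! j)), fst (snd (gbs ! ([k0] ! j))), proj H r)) [0..<length [k0]]))"
          using rt g0 by simp
        show ?thesis unfolding GChoice
          by (rule deep_assemble[where ?is="[k0]" and a="\<lambda>j. fst (gbs ! ([k0] ! j))" and b="\<lambda>j. fst (snd (gbs ! ([k0] ! j)))" and hH="\<lambda>_. H" and hR="\<lambda>_. R0" and hS="\<lambda>_. S", OF giG rp rq Np Nq ne refl refl st ad rc op Nr rt'])
      next
        assume "\<exists>rbs. Tr' = TSend rbs"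
        then obtain rbs where e: "Tr' = TSend rbs" by blast
        have rne: "rbs \<noteq> []" using Tr'(2) e unfolding tgood_def by simp
        from inv_send_send[OF tjr[unfolded e]] obtain f where f: "inj_on f {..<length rbs}"
          "\<forall>i<length rbs. f i < length ?cs \<and> fst (?cs ! f i) = fst (rbs ! i)
                 \<and> fst (snd (?cs ! f i)) = fst (snd (rbs ! i))
                 \<and> tj (snd (snd (rbs ! i))) (snd (snd (?cs ! f i)))" by blast
        let ?n = "length rbs"
        have ex: "\<exists>H S. gstep (snd (snd (gbs ! f j))) (p,l,q) H \<and> fst (gbs ! f j) \<noteq> p \<and> fst (gbs ! f j) \<noteq> q \<and> fst (gbs ! f j) \<noteq> r \<and>
            (\<exists>T. N (fst (gbs ! f j)) = Some T \<and> tj T (PRecv r (fst (snd (gbs ! f j))) (proj H (fst (gbs ! f j))))) \<and>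
            outp (N(r \<mapsto> snd (snd (rbs ! j)), fst (gbs ! f j) \<mapsto> S, p \<mapsto> Q, q \<mapsto> P)) H" if j: "j < ?n" for j
        proof -
          obtain sj mj Rj where rj: "rbs ! j = (sj, mj, Rj)" by (cases "rbs ! j") auto
          obtain Gj where gj: "gbs ! f j = (sj, mj, Gj)" "f j < length gbs" "tj Rj (proj Gj r)"
            using f(2) j rj by (cases "gbs ! f j") auto
          have "nstep (N(r \<mapsto> Tr')) Tau ((N(r \<mapsto> Tr'))(r \<mapsto> TPend sj mj Rj))"
            by (rule nstep.choice[of _ r rbs j]) (use e j rj in auto)
          then have "nstep (N(r \<mapsto> Tr')) Tau (N(r \<mapsto> TPend sj mj Rj))" by simp
          then have rj2: "nreach N (N(r \<mapsto> TPend sj mj Rj))" by (rule nreach_step[OF reach1])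
          have "(sj, mj, Rj) \<in> set rbs" by (rule branch_mem[OF j rj])
          then have rj3: "tgood Rj" using Tr'(2) e tgood_cont_send[of rbs sj mj Rj] by simp
          have "\<exists>H S. gstep Gj (p,l,q) H \<and> sj \<noteq> p \<and> sj \<noteq> q \<and> sj \<noteq> r \<and>
            (\<exists>T. N sj = Some T \<and> tj T (PRecv r mj (proj H sj))) \<and>
            outp (N(r \<mapsto> Rj, sj \<mapsto> S, p \<mapsto> Q, q \<mapsto> P)) H"
            by (rule deep_branch[OF giG rp Np Nq k gj(2,1) rj2 gj(3) rj3 IH'])
          then show ?thesis unfolding gj(1) rj by simp
        qed
        define Phi where "Phi = (\<lambda>j H S. gstep (snd (snd (gbs ! f j))) (p,l,q) H \<and> fst (gbs ! f j) \<noteq> p \<and> fst (gbs ! f j) \<noteq> q \<and> fst (gbs ! f j) \<noteq> r \<and>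
            (\<exists>T. N (fst (gbs ! f j)) = Some T \<and> tj T (PRecv r (fst (snd (gbs ! f j))) (proj H (fst (gbs ! f j))))) \<and>
            outp (N(r \<mapsto> snd (snd (rbs ! j)), fst (gbs ! f j) \<mapsto> S, p \<mapsto> Q, q \<mapsto> P)) H)"
        have "\<forall>j. \<exists>HS. j < ?n \<longrightarrow> Phi j (fst HS) (snd HS)"
        proof
          fix j
          show "\<exists>HS. j < ?n \<longrightarrow> Phi j (fst HS) (snd HS)"
          proof (cases "j < ?n")
            case True
            from ex[OF True] obtain H S where "Phi j H S" unfolding Phi_def by blast
            then show ?thesis by (intro exI[of _ "(H,S)"]) simp
          qed simp
        qed
        from Hilbert_Choice.choice[OF this] obtain hf where hf0: "\<forall>j. j < ?n \<longrightarrow> Phi j (fst (hf j)) (snd (hf j))" by blast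
        have hf: "gstep (snd (snd (gbs ! f j))) (p,l,q) (fst (hf j)) \<and> fst (gbs ! f j) \<noteq> p \<and> fst (gbs ! f j) \<noteq> q \<and> fst (gbs ! f j) \<noteq> r \<and>
            (\<exists>T. N (fst (gbs ! f j)) = Some T \<and> tj T (PRecv r (fst (snd (gbs ! f j))) (proj (fst (hf j)) (fst (gbs ! f j))))) \<and>
            outp (N(r \<mapsto> snd (snd (rbs ! j)), fst (gbs ! f j) \<mapsto> snd (hf j), p \<mapsto> Q, q \<mapsto> P)) (fst (hf j))" if "j < ?n" for j
          using hf0 that unfolding Phi_def by blast
        let ?is = "map f [0..<?n]"
        have isj: "?is ! j = f j" if "j < ?n" for j using that by simp
        have rt: "tj Tr (PSend (map (\<lambda>j. (fst (gbs ! (?is ! j)), fst (snd (gbs ! (?is ! j))), proj (fst (hf j)) r)) [0..<length ?is]))"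
        proof -
          have "tj Tr' (PSend (map (\<lambda>j. (fst (gbs ! (?is ! j)), fst (snd (gbs ! (?is ! j))), proj (fst (hf j)) r)) [0..<length ?is]))"
            unfolding e
          proof (rule tj.send[of id])
            show "inj_on id {..<length rbs}" by simp
            show "\<forall>i<length rbs. id i < length (map (\<lambda>j. (fst (gbs ! (?is ! j)), fst (snd (gbs ! (?is ! j))), proj (fst (hf j)) r)) [0..<length ?is]) \<and>
              fst (map (\<lambda>j. (fst (gbs ! (?is ! j)), fst (snd (gbs ! (?is ! j))), proj (fst (hf j)) r)) [0..<length ?is] ! id i) = fst (rbs ! i) \<and>
              fst (snd (map (\<lambda>j. (fst (gbs ! (?is ! j)), fst (snd (gbs ! (?is ! j))), proj (fst (hf j)) r)) [0..<length ?is] ! id i)) = fst (snd (rbs ! i)) \<and>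
              tj (snd (snd (rbs ! i))) (snd (snd (map (\<lambda>j. (fst (gbs ! (?is ! j)), fst (snd (gbs ! (?is ! j))), proj (fst (hf j)) r)) [0..<length ?is] ! id i)))"
            proof (intro allI impI)
              fix i assume i: "i < length rbs"
              obtain si mi Ri where ri: "rbs ! i = (si, mi, Ri)" by (cases "rbs ! i") auto
              obtain Gi where gi': "gbs ! f i = (si, mi, Gi)"
                using f(2) i ri by (cases "gbs ! f i") auto
              have "(N(r \<mapsto> Ri, fst (gbs ! f i) \<mapsto> snd (hf i), p \<mapsto> Q, q \<mapsto> P)) r = Some Ri"
                using hf[OF i] rp rq by auto
              then have "tj Ri (proj (fst (hf i)) r)" using hf[OF i] ri unfolding outp_def by auto
              then show "id i < length (map (\<lambda>j. (fst (gbs ! (?is ! j)), fst (snd (gbs ! (?is ! j))), proj (fst (hf j)) r)) [0..<length ?is]) \<and>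
              fst (map (\<lambda>j. (fst (gbs ! (?is ! j)), fst (snd (gbs ! (?is ! j))), proj (fst (hf j)) r)) [0..<length ?is] ! id i) = fst (rbs ! i) \<and>
              fst (snd (map (\<lambda>j. (fst (gbs ! (?is ! j)), fst (snd (gbs ! (?is ! j))), proj (fst (hf j)) r)) [0..<length ?is] ! id i)) = fst (snd (rbs ! i)) \<and>
              tj (snd (snd (rbs ! i))) (snd (snd (map (\<lambda>j. (fst (gbs ! (?is ! j)), fst (snd (gbs ! (?is ! j))), proj (fst (hf j)) r)) [0..<length ?is] ! id i)))"
                using i ri gi' by simp
            qed
          qed
          then show ?thesis using unfs_tj_bwd Tr'(1) by blast
        qed
        have dist: "distinct ?is" using f(1) by (simp add: distinct_map lessThan_atLeast0)
        have valid: "\<forall>i\<in>set ?is. i < length gbs" using f(2) by auto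
        have ne: "?is \<noteq> []" using rne by simp
        have st: "gstep (snd (snd (gbs ! (?is ! j)))) (p,l,q) (fst (hf j))" if "j < length ?is" for j
          using hf[of j] that by simp
        have ad: "fst (gbs ! (?is ! j)) \<noteq> p \<and> fst (gbs ! (?is ! j)) \<noteq> q \<and> fst (gbs ! (?is ! j)) \<noteq> r" if "j < length ?is" for j
          using hf[of j] that by simp
        have rc: "\<exists>T. N (fst (gbs ! (?is ! j))) = Some T \<and> tj T (PRecv r (fst (snd (gbs ! (?is ! j)))) (proj (fst (hf j)) (fst (gbs ! (?is ! j)))))" if "j < length ?is" for j
          using hf[of j] that by simp
        have op: "outp (N(r \<mapsto> snd (snd (rbs ! j)), fst (gbs ! (?is ! j)) \<mapsto> snd (hf j), p \<mapsto> Q, q \<mapsto> P)) (fst (hf j))" if "j < length ?is" for j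
          using hf[of j] that by simp
        show ?thesis unfolding GChoice
          by (rule deep_assemble[where ?is="?is" and a="\<lambda>j. fst (gbs ! (?is ! j))" and b="\<lambda>j. fst (snd (gbs ! (?is ! j)))"
              and hH="\<lambda>j. fst (hf j)" and hR="\<lambda>j. snd (snd (rbs ! j))" and hS="\<lambda>j. snd (hf j)", OF giG rp rq Np Nq ne dist valid refl refl st ad rc op Nr rt])
      qed
    qed
  qed
qed


theorem mainTheorem9:
  fixes N M :: "('p,'l) net" and G :: "('p,'l) gtype"
  assumes "is_netstate N"
    and "race_free N"
    and "wf_gtype G"
    and "net_typ_g N G"
    and "nstep N (Comm p l q) M"
  shows "\<exists>G'. gstep G (p, l, q) G' \<and> net_typ_g M G'"
proof -
  have gi: "ginv N G"
  proof -
    have "tgood T" if "N t = Some T" for t T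
      using assms(1) that tstate_tgood unfolding is_netstate_def by blast
    moreover have "gne G" "gsr G" using assms(3) wf_gne wf_gsr by blast+
    moreover have "gfv G = {}" "pt G \<subseteq> dom N" "\<And>t T. N t = Some T \<Longrightarrow> tj T (proj G t)"
      "\<And>t. t \<in> dom N \<Longrightarrow> guarded (proj G t)"
      using assms(4) unfolding net_typ_g_def net_typ_def by blast+
    ultimately show ?thesis unfolding ginv_def using assms(2) by blast
  qed
  from assms(5) obtain Q bs k P where c: "N p = Some (TPend q l Q)" "N q = Some (TRecv bs)"
      "k < length bs" "bs ! k = (p, l, P)" "M = N(p \<mapsto> Q, q \<mapsto> P)"
    by (cases rule: nstep.cases) auto
  from main_lemma[OF gi c(1-4)] obtain G' where G': "gstep G (p,l,q) G'" "outp (N(p \<mapsto> Q, q \<mapsto> P)) G'"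
    by blast
  have "net_typ_g M G'"
    using G'(2) unfolding c(5) outp_def net_typ_g_def net_typ_def by blast
  then show ?thesis using G'(1) by blast
qed

end
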